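(* Let $\hat h^\bullet$ be a relative differential extension of a cohomology theory $h^\bullet$ and $\rho\colon A\to X$ a smooth map. Then the sequence $$\cdots\to h^n(\rho)\xrightarrow{\mathrm{ch}}H^n_{dR}(\rho;\mathfrak h^\bullet_{\mathbb R})\xrightarrow{a}\hat h^{n+1}_{\mathrm{fl}}(\rho)\xrightarrow{I}h^{n+1}(\rho)\xrightarrow{\mathrm{ch}}H^{n+1}_{dR}(\rho;\mathfrak h^\bullet_{\mathbb R})\to\cdots$$ is exact, where $a$ is restricted to $H^n_{dR}(\rho;\mathfrak h^\bullet_{\mathbb R})\subset\Omega^n_{\mathrm{cl}}(\rho;\mathfrak h^\bullet_{\mathbb R})/\mathrm{Im}(d)$ and $\hat h^\bullet_{\mathrm{fl}}(\rho)=\ker R$.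
   Context: Let $h^\bullet$ be a cohomology theory defined on continuous maps: for a map $\rho\colon A\to X$, $h^\bullet(\rho)$ is its relative cohomology (the reduced cohomology of the mapping cone). Put $\mathfrak h^\bullet=h^\bullet(pt)$, $\mathfrak h^\bullet_{\mathbb R}=\mathfrak h^\bullet\otimes_{\mathbb Z}\mathbb R$. Let $\mathcal M_2$ be the category whose objects are smooth maps $\rho\colon A\to X$ between smooth manifolds (possibly with boundary), a morphism from $\eta\colon B\to Y$ to $\rho$ being a pair $(f,g)$ of smooth maps $f\colon Y\to X$, $g\colon B\to A$ with $f\circ\eta=\rho\circ g$. For $\rho\colon A\to X$ set $\Omega^\bullet(\rho;\mathfrak h^\bullet_{\mathbb R})=\Omega^\bullet(X;\mathfrak h^\bullet_{\mathbb R})\oplus\Omega^{\bullet-1}(A;\mathfrak h^\bullet_{\mathbb R})$ (total degree) with differential $d(\omega,\eta)=(d\omega,\rho^*\omega-d\eta)$; its cohomology is $H^\bullet_{dR}(\rho;\mathfrak h^\bullet_{\mathbb R})$, and $\mathrm{ch}\colon h^\bullet(\rho)\to H^\bullet_{dR}(\rho;\mathfrak h^\bullet_{\mathbb R})$ is the relative Chern character. A relative differential extension of $h^\bullet$ is a contravariant functor $\hat h^\bullet$ from $\mathcal M_2$ to graded abelian groups with natural transformations $I\colon\hat h^\bullet(\rho)\to h^\bullet(\rho)$, $R\colon\hat h^\bullet(\rho)\to\Omega^\bullet_{\mathrm{cl}}(\rho;\mathfrak h^\bullet_{\mathbb R})$, $a\colon\Omega^{\bullet-1}(\rho;\mathfrak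 h^\bullet_{\mathbb R})/\mathrm{Im}(d)\to\hat h^\bullet(\rho)$ such that: (A1) $R\circ a=d$; (A2) the de Rham class of $R(\hat\alpha)$ is $\mathrm{ch}(I(\hat\alpha))$; (A3) $h^{\bullet-1}(\rho)\xrightarrow{\mathrm{ch}}\Omega^{\bullet-1}(\rho;\mathfrak h^\bullet_{\mathbb R})/\mathrm{Im}(d)\xrightarrow{a}\hat h^\bullet(\rho)\xrightarrow{I}h^\bullet(\rho)\to0$ is exact; (A4) writing $R=(R',\mathrm{cov})$ and $\pi$ for the natural morphism from $\emptyset\to X$ to $\rho$ (with $\hat h^\bullet(X):=\hat h^\bullet(\emptyset\to X)$), $\rho^*\circ\pi^*=a\circ\mathrm{cov}$. Flat classes are those with $R=0$. *)

theory Defs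
  imports Main
begin

text \<open>Abstract algebraic data of a relative differential extension evaluated at one
fixed smooth map rho. Graded groups are modelled by degree-indexed carrier subsets
(subgroups) of ambient abelian groups:
  hh n  = carrier of hat-h^n(rho),
  h n   = carrier of h^n(rho),
  Om n  = carrier of Omega^n(rho; h_R) (total degree), with differential d.
De Rham classes are represented by closed forms modulo exact forms; ch y is a
closed representative of the relative Chern character of y (defined up to exact
forms). The map a is given on forms and required to vanish on exact forms, i.e.
it factors through Omega^(n-1)/Im d.\<close>

definition subgrp :: "'a::ab_group_add set \<Rightarrow> bool" where
  "subgrp S \<longleftrightarrow> 0 \<in> S \<and> (\<forall>x\<in>S. \<forall>y\<in>S. x + y \<in> S) \<and> (\<forall>x\<in>S. - x \<in> S)"

definition additive_on :: "'a::ab_group_add set \<Rightarrow> ('a \<Rightarrow> 'b::ab_group_add) \<Rightarrow> bool" where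
  "additive_on S f \<longleftrightarrow> (\<forall>x\<in>S. \<forall>y\<in>S. f (x + y) = f x + f y)"

definition closed_forms :: "(int \<Rightarrow> 'w::ab_group_add set) \<Rightarrow> ('w \<Rightarrow> 'w) \<Rightarrow> int \<Rightarrow> 'w set" where
  "closed_forms Om d n = {w \<in> Om n. d w = 0}"

definition exact_forms :: "(int \<Rightarrow> 'w::ab_group_add set) \<Rightarrow> ('w \<Rightarrow> 'w) \<Rightarrow> int \<Rightarrow> 'w set" where
  "exact_forms Om d n = d ` Om (n - 1)"

definition rel_diff_ext_at ::
  "(int \<Rightarrow> 'a::ab_group_add set) \<Rightarrow> (int \<Rightarrow> 'b::ab_group_add set) \<Rightarrow> (int \<Rightarrow> 'w::ab_group_add set)
   \<Rightarrow> ('w \<Rightarrow> 'w) \<Rightarrow> ('a \<Rightarrow> 'b) \<Rightarrow> ('a \<Rightarrow> 'w) \<Rightarrow> ('w \<Rightarrow> 'a) \<Rightarrow> ('b \<Rightarrow> 'w) \<Rightarrow> bool" where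
  "rel_diff_ext_at hh h Om d I R a ch \<longleftrightarrow>
     (\<forall>n. subgrp (hh n) \<and> subgrp (h n) \<and> subgrp (Om n)) \<and>
     (\<forall>n. additive_on (Om n) d \<and> d ` Om n \<subseteq> Om (n + 1)) \<and>
     (\<forall>n. \<forall>w\<in>Om n. d (d w) = 0) \<and>
     (\<forall>n. additive_on (hh n) I \<and> I ` hh n \<subseteq> h n) \<and>
     (\<forall>n. additive_on (hh n) R \<and> R ` hh n \<subseteq> closed_forms Om d n) \<and>
     (\<forall>n. additive_on (Om (n - 1)) a \<and> a ` Om (n - 1) \<subseteq> hh n) \<and>
     (\<forall>n. \<forall>w\<in>exact_forms Om d (n - 1). a w = 0) \<and>
     (\<forall>n. ch ` h n \<subseteq> closed_forms Om d n) \<and>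
     (\<forall>n. \<forall>x\<in>h n. \<forall>y\<in>h n. ch (x + y) - (ch x + ch y) \<in> exact_forms Om d n) \<and>
     \<comment> \<open>(A1) R o a = d\<close>
     (\<forall>n. \<forall>w\<in>Om (n - 1). R (a w) = d w) \<and>
     \<comment> \<open>(A2) [R x] = ch (I x)\<close>
     (\<forall>n. \<forall>x\<in>hh n. R x - ch (I x) \<in> exact_forms Om d n) \<and>
     \<comment> \<open>(A3) exactness of h^(n-1) -> Omega^(n-1)/Im d -> hat h^n -> h^n -> 0\<close>
     (\<forall>n. \<forall>w\<in>Om (n - 1). a w = 0 \<longleftrightarrow>
            (\<exists>y\<in>h (n - 1). w - ch y \<in> exact_forms Om d (n - 1))) \<and>
     (\<forall>n. \<forall>x\<in>hh n. I x = 0 \<longleftrightarrow> (\<exists>w\<in>Om (n - 1). a w = x)) \<and>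
     (\<forall>n. I ` hh n = h n)"

end

theory Submission
  imports Defs
begin

lemma add_diff:
  assumes "subgrp S" "additive_on S f" "x \<in> S" "y \<in> S"
  shows "f (x - y) = f x - f y"
proof -
  have m: "- y \<in> S" using assms unfolding subgrp_def by blast
  have z: "0 \<in> S" using assms unfolding subgrp_def by blast
  have "f 0 = f 0 + f 0" using assms(2) z unfolding additive_on_def by (metis add_0)
  hence f0: "f 0 = 0" by simp
  have "f (y + - y) = f y + f (- y)" using assms(2,4) m unfolding additive_on_def by blast
  hence "f y + f (- y) = 0" using f0 by simp
  hence "- f y = f (- y)" by (rule minus_unique)
  hence "f (- y) = - f y" by simp
  moreover have "f (x + - y) = f x + f (- y)" using assms(2,3) m unfolding additive_on_def by blast
  ultimately show ?thesis by simp
qed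

theorem lemma2p5:
  fixes hh :: "int \<Rightarrow> 'a::ab_group_add set" and h :: "int \<Rightarrow> 'b::ab_group_add set"
    and Om :: "int \<Rightarrow> 'w::ab_group_add set" and d :: "'w \<Rightarrow> 'w"
    and I :: "'a \<Rightarrow> 'b" and R :: "'a \<Rightarrow> 'w" and a :: "'w \<Rightarrow> 'a" and ch :: "'b \<Rightarrow> 'w"
  assumes "rel_diff_ext_at hh h Om d I R a ch"
  shows
    \<comment> \<open>a maps H^n_dR into flat classes\<close>
    "(\<forall>n. \<forall>w\<in>closed_forms Om d n. a w \<in> hh (n + 1) \<and> R (a w) = 0) \<and>
     \<comment> \<open>exactness at H^n_dR\<close>
     (\<forall>n. \<forall>w\<in>closed_forms Om d n.
        a w = 0 \<longleftrightarrow> (\<exists>y\<in>h n. w - ch y \<in> exact_forms Om d n)) \<and>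
     \<comment> \<open>exactness at hat h^(n+1)_fl\<close>
     (\<forall>n. \<forall>x\<in>hh (n + 1). R x = 0 \<longrightarrow>
        (I x = 0 \<longleftrightarrow> (\<exists>w\<in>closed_forms Om d n. a w = x))) \<and>
     \<comment> \<open>exactness at h^(n+1)\<close>
     (\<forall>n. \<forall>y\<in>h (n + 1).
        ch y \<in> exact_forms Om d (n + 1) \<longleftrightarrow> (\<exists>x\<in>hh (n + 1). R x = 0 \<and> I x = y))"
proof -
  have C1: "(\<forall>n. subgrp (hh n) \<and> subgrp (h n) \<and> subgrp (Om n))" using assms unfolding rel_diff_ext_at_def by (elim conjE) assumption
  have C2: "(\<forall>n. additive_on (Om n) d \<and> d ` Om n \<subseteq> Om (n + 1))" using assms unfolding rel_diff_ext_at_def by (elim conjE) assumption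
  have C3: "(\<forall>n. \<forall>w\<in>Om n. d (d w) = 0)" using assms unfolding rel_diff_ext_at_def by (elim conjE) assumption
  have C4: "(\<forall>n. additive_on (hh n) I \<and> I ` hh n \<subseteq> h n)" using assms unfolding rel_diff_ext_at_def by (elim conjE) assumption
  have C5: "(\<forall>n. additive_on (hh n) R \<and> R ` hh n \<subseteq> closed_forms Om d n)" using assms unfolding rel_diff_ext_at_def by (elim conjE) assumption
  have C6: "(\<forall>n. additive_on (Om (n - 1)) a \<and> a ` Om (n - 1) \<subseteq> hh n)" using assms unfolding rel_diff_ext_at_def by (elim conjE) assumption
  have C7: "(\<forall>n. \<forall>w\<in>exact_forms Om d (n - 1). a w = 0)" using assms unfolding rel_diff_ext_at_def by (elim conjE) assumption
  have C8: "(\<forall>n. ch ` h n \<subseteq> closed_forms Om d n)" using assms unfolding rel_diff_ext_at_def by (elim conjE) assumption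
  have C9: "(\<forall>n. \<forall>x\<in>h n. \<forall>y\<in>h n. ch (x + y) - (ch x + ch y) \<in> exact_forms Om d n)" using assms unfolding rel_diff_ext_at_def by (elim conjE) assumption
  have C10: "(\<forall>n. \<forall>w\<in>Om (n - 1). R (a w) = d w)" using assms unfolding rel_diff_ext_at_def by (elim conjE) assumption
  have C11: "(\<forall>n. \<forall>x\<in>hh n. R x - ch (I x) \<in> exact_forms Om d n)" using assms unfolding rel_diff_ext_at_def by (elim conjE) assumption
  have C12: "(\<forall>n. \<forall>w\<in>Om (n - 1). a w = 0 \<longleftrightarrow>
            (\<exists>y\<in>h (n - 1). w - ch y \<in> exact_forms Om d (n - 1)))" using assms unfolding rel_diff_ext_at_def by (elim conjE) assumption
  have C13: "(\<forall>n. \<forall>x\<in>hh n. I x = 0 \<longleftrightarrow> (\<exists>w\<in>Om (n - 1). a w = x))" using assms unfolding rel_diff_ext_at_def by (elim conjE) assumption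
  have C14: "(\<forall>n. I ` hh n = h n)" using assms unfolding rel_diff_ext_at_def by (elim conjE) assumption
  have sg: "\<And>n. subgrp (hh n)" "\<And>n. subgrp (h n)" "\<And>n. subgrp (Om n)" using C1 by simp_all
  have dadd: "\<And>n. additive_on (Om n) d" and dOm: "\<And>n w. w \<in> Om n \<Longrightarrow> d w \<in> Om (n+1)" using C2 by blast+
  have Iadd: "\<And>n. additive_on (hh n) I" using C4 by blast
  have Radd: "\<And>n. additive_on (hh n) R" using C5 by blast
  have RhOm: "\<And>n x. x \<in> hh n \<Longrightarrow> R x \<in> Om n" using C5 unfolding closed_forms_def by blast
  have aOm: "\<And>n w. w \<in> Om n \<Longrightarrow> a w \<in> hh (n+1)"
  proof -
    fix n w assume "w \<in> Om n"
    moreover have "a ` Om ((n+1) - 1) \<subseteq> hh (n+1)" using C6 by blast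
    ultimately show "a w \<in> hh (n+1)" by auto
  qed
  have A1: "\<And>n w. w \<in> Om n \<Longrightarrow> R (a w) = d w"
  proof -
    fix n w assume "w \<in> Om n"
    moreover have "\<forall>w\<in>Om ((n+1) - 1). R (a w) = d w" using C10 by blast
    ultimately show "R (a w) = d w" by auto
  qed
  have A2: "\<And>n x. x \<in> hh n \<Longrightarrow> R x - ch (I x) \<in> exact_forms Om d n" using C11 by blast
  have A3a: "\<And>n w. w \<in> Om n \<Longrightarrow> a w = 0 \<longleftrightarrow> (\<exists>y\<in>h n. w - ch y \<in> exact_forms Om d n)"
  proof -
    fix n w assume "w \<in> Om n"
    moreover have "\<forall>w\<in>Om ((n+1) - 1). a w = 0 \<longleftrightarrow>
            (\<exists>y\<in>h ((n+1) - 1). w - ch y \<in> exact_forms Om d ((n+1) - 1))" using C12 by blast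
    ultimately show "a w = 0 \<longleftrightarrow> (\<exists>y\<in>h n. w - ch y \<in> exact_forms Om d n)" by simp
  qed
  have A3b: "\<And>n x. x \<in> hh (n+1) \<Longrightarrow> I x = 0 \<longleftrightarrow> (\<exists>w\<in>Om n. a w = x)"
  proof -
    fix n x assume "x \<in> hh (n+1)"
    moreover have "\<forall>x\<in>hh (n+1). I x = 0 \<longleftrightarrow> (\<exists>w\<in>Om ((n+1) - 1). a w = x)" using C13 by blast
    ultimately show "I x = 0 \<longleftrightarrow> (\<exists>w\<in>Om n. a w = x)" by simp
  qed
  have surj: "\<And>n. I ` hh n = h n" using C14 by blast
  have p1: "\<forall>n. \<forall>w\<in>closed_forms Om d n. a w \<in> hh (n + 1) \<and> R (a w) = 0"
    using aOm A1 unfolding closed_forms_def by auto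
  have p2: "\<forall>n. \<forall>w\<in>closed_forms Om d n.
        a w = 0 \<longleftrightarrow> (\<exists>y\<in>h n. w - ch y \<in> exact_forms Om d n)"
    using A3a unfolding closed_forms_def by auto
  have p3: "\<forall>n. \<forall>x\<in>hh (n + 1). R x = 0 \<longrightarrow>
        (I x = 0 \<longleftrightarrow> (\<exists>w\<in>closed_forms Om d n. a w = x))"
  proof (intro allI ballI impI)
    fix n x assume x: "x \<in> hh (n+1)" and R0: "R x = 0"
    show "I x = 0 \<longleftrightarrow> (\<exists>w\<in>closed_forms Om d n. a w = x)"
    proof
      assume "I x = 0"
      then obtain w where w: "w \<in> Om n" "a w = x" using A3b x by blast
      hence "d w = 0" using A1 R0 by metis
      thus "\<exists>w\<in>closed_forms Om d n. a w = x" using w unfolding closed_forms_def by blast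
    next
      assume "\<exists>w\<in>closed_forms Om d n. a w = x"
      thus "I x = 0" using A3b x unfolding closed_forms_def by blast
    qed
  qed
  have p4: "\<forall>n. \<forall>y\<in>h (n + 1).
        ch y \<in> exact_forms Om d (n + 1) \<longleftrightarrow> (\<exists>x\<in>hh (n + 1). R x = 0 \<and> I x = y)"
  proof (intro allI ballI)
    fix n y assume y: "y \<in> h (n+1)"
    show "ch y \<in> exact_forms Om d (n + 1) \<longleftrightarrow> (\<exists>x\<in>hh (n + 1). R x = 0 \<and> I x = y)"
    proof
      assume "ch y \<in> exact_forms Om d (n + 1)"
      then obtain u where u: "u \<in> Om n" "ch y = d u" unfolding exact_forms_def by auto
      obtain x where x: "x \<in> hh (n+1)" "I x = y" using surj y by (metis imageE)
      from A2[OF x(1)] obtain v where v: "v \<in> Om n" "R x - ch y = d v"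
        unfolding exact_forms_def using x(2) by auto
      have uv: "u + v \<in> Om n" using sg(3) u v unfolding subgrp_def by blast
      have "d (u + v) = d u + d v" using dadd u v unfolding additive_on_def by blast
      hence Rx: "R x = d (u + v)" using u v by (simp add: algebra_simps)
      define x' where "x' = x - a (u + v)"
      have ax: "a (u+v) \<in> hh (n+1)" using aOm uv by blast
      have x'h: "x' \<in> hh (n+1)" unfolding x'_def using sg(1)[of "n+1"] x(1) ax
        unfolding subgrp_def by (metis diff_conv_add_uminus)
      have "R x' = R x - R (a (u+v))" unfolding x'_def using add_diff[OF sg(1) Radd x(1) ax] .
      hence "R x' = 0" using Rx A1[OF uv] by simp
      moreover have "I x' = I x - I (a (u+v))" unfolding x'_def using add_diff[OF sg(1) Iadd x(1) ax] .
      moreover have "I (a (u+v)) = 0" using A3b ax uv by blast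
      ultimately show "\<exists>x\<in>hh (n + 1). R x = 0 \<and> I x = y" using x'h x(2) by auto
    next
      assume "\<exists>x\<in>hh (n + 1). R x = 0 \<and> I x = y"
      then obtain x where x: "x \<in> hh (n+1)" "R x = 0" "I x = y" by blast
      from A2[OF x(1)] obtain v where v: "v \<in> Om ((n+1) - 1)" "- ch y = d v"
        unfolding exact_forms_def using x by auto
      have mv: "- v \<in> Om ((n+1) - 1)" using sg(3) v unfolding subgrp_def by blast
      have z: "0 \<in> Om ((n+1) - 1)" using sg(3) unfolding subgrp_def by blast
      have "d (0 - v) = d 0 - d v" using add_diff[OF sg(3) dadd z v(1)] .
      moreover have "d 0 = 0" using add_diff[OF sg(3) dadd z z] by simp
      ultimately have "d (- v) = - d v" by simp
      also have "\<dots> = ch y" using v(2) by (metis minus_minus)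
      finally have "d (- v) = ch y" .
      thus "ch y \<in> exact_forms Om d (n + 1)" unfolding exact_forms_def using mv by (metis imageI)
    qed
  qed
  show ?thesis using p1 p2 p3 p4 by blast
qed

end
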